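(* Let $G=\mathrm{SL}_2(\mathbb{C})\times\dots\times\mathrm{SL}_2(\mathbb{C})$ be a product of finitely many copies of $\mathrm{SL}_2(\mathbb{C})$, and let $\Gamma,\Gamma'$ be mutually commensurable lattices in $G$. Then for any subgroup $F$ of $G$, the set $E(F)=\{x:Fx\text{ is bounded}\}$ is HAW in $G/\Gamma$ if and only if the corresponding set $E(F)$ is HAW in $G/\Gamma'$.
   Context: Lattices $\Gamma,\Gamma'$ are commensurable if $\Gamma\cap\Gamma'$ has finite index in both. "Bounded" means relatively compact. $G/\Gamma$ is a complex manifold. HAW (hyperplane-absolute-winning): in $\mathbb{C}^d$, for $0<\beta<1/3$ Player B picks a closed ball $B_0$; after B's closed ball $B_j$ of radius $\rho_j$, A picks the open $\delta_j$-neighborhood of a complex affine hyperplane with $\delta_j\le\beta\rho_j$, and B picks a closed ball $B_{j+1}\subset B_j$ disjoint from it of radius $\ge\beta\rho_j$; $E$ is HAW if for every $\beta\in(0,1/3)$ A can force $E\cap\bigcap_jB_j\ne\emptyset$ (on an open $\Omega$, require $B_0\subset\Omega$). A subset of a complex manifold is HAW if its image in every holomorphic chart is HAW on the chart's image. *)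

theory Defs
  imports "HOL-Analysis.Analysis" "HOL-Probability.Probability"
begin

type_synonym 'k grp = "complex^2^2^'k"
type_synonym 'k cvec = "complex^3^'k"      \<comment> \<open>C^(3k), the model space of G/Gamma\<close>

text \<open>G = SL_2(C) x ... x SL_2(C)  (CARD('k) copies), sitting inside C^(4k).\<close>
definition SLprod :: "'k::finite grp set" where
  "SLprod = {g. \<forall>i. det (g$i) = 1}"

definition gmul :: "'k::finite grp \<Rightarrow> 'k grp \<Rightarrow> 'k grp" where
  "gmul g h = (\<chi> i. g$i ** h$i)"

definition gone :: "'k::finite grp" where
  "gone = (\<chi> i. mat 1)"

definition is_subgroup :: "'k::finite grp set \<Rightarrow> bool" where
  "is_subgroup H \<longleftrightarrow> H \<subseteq> SLprod \<and> gone \<in> H \<and> (\<forall>x\<in>H. \<forall>y\<in>H. gmul x y \<in> H)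
     \<and> (\<forall>x\<in>H. \<exists>y\<in>H. gmul x y = gone)"

definition lcoset :: "'k::finite grp \<Rightarrow> 'k grp set \<Rightarrow> 'k grp set" where
  "lcoset g H = gmul g ` H"

definition quot :: "'k::finite grp set \<Rightarrow> 'k grp set set" where
  "quot \<Gamma> = {lcoset g \<Gamma> | g. g \<in> SLprod}"

definition qtop :: "'k::finite grp set \<Rightarrow> 'k grp set topology" where
  "qtop \<Gamma> = topology (\<lambda>U. U \<subseteq> quot \<Gamma> \<and>
      openin (top_of_set SLprod) {g \<in> SLprod. lcoset g \<Gamma> \<in> U})"

definition act :: "'k::finite grp \<Rightarrow> 'k grp set \<Rightarrow> 'k grp set" where
  "act g x = gmul g ` x"

definition discrete_subgroup :: "'k::finite grp set \<Rightarrow> bool" where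
  "discrete_subgroup \<Gamma> \<longleftrightarrow> is_subgroup \<Gamma> \<and>
     (\<forall>\<gamma>\<in>\<Gamma>. \<exists>e>0. \<forall>\<gamma>'\<in>\<Gamma>. dist \<gamma>' \<gamma> < e \<longrightarrow> \<gamma>' = \<gamma>)"

definition lattice :: "'k::finite grp set \<Rightarrow> bool" where
  "lattice \<Gamma> \<longleftrightarrow> discrete_subgroup \<Gamma> \<and>
     (\<exists>\<mu> :: 'k grp set measure.
        space \<mu> = quot \<Gamma> \<and>
        sets \<mu> = sigma_sets (quot \<Gamma>) {U. openin (qtop \<Gamma>) U} \<and>
        0 < emeasure \<mu> (quot \<Gamma>) \<and> emeasure \<mu> (quot \<Gamma>) < \<infinity> \<and>
        (\<forall>g\<in>SLprod. \<forall>A\<in>sets \<mu>. emeasure \<mu> (act g ` A) = emeasure \<mu> A))"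

definition finite_index :: "'k::finite grp set \<Rightarrow> 'k grp set \<Rightarrow> bool" where
  "finite_index H K \<longleftrightarrow> finite {lcoset g H | g. g \<in> K}"   \<comment> \<open>[K : H] finite\<close>

definition commensurable :: "'k::finite grp set \<Rightarrow> 'k grp set \<Rightarrow> bool" where
  "commensurable \<Gamma> \<Gamma>' \<longleftrightarrow> finite_index (\<Gamma> \<inter> \<Gamma>') \<Gamma> \<and> finite_index (\<Gamma> \<inter> \<Gamma>') \<Gamma>'"

definition Ebdd :: "'k::finite grp set \<Rightarrow> 'k grp set \<Rightarrow> 'k grp set set" where
  "Ebdd F \<Gamma> = {x \<in> quot \<Gamma>. compactin (qtop \<Gamma>) ((qtop \<Gamma>) closure_of ((\<lambda>f. act f x) ` F))}"

definition csv :: "complex \<Rightarrow> 'k::finite cvec \<Rightarrow> 'k cvec" where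
  "csv c v = (\<chi> i j. c * v$i$j)"

definition csg :: "complex \<Rightarrow> 'k::finite grp \<Rightarrow> 'k grp" where
  "csg c m = (\<chi> i j l. c * m$i$j$l)"

definition holo_vg :: "'k::finite cvec set \<Rightarrow> ('k cvec \<Rightarrow> 'k grp) \<Rightarrow> bool" where
  "holo_vg W h \<longleftrightarrow> (\<forall>z\<in>W. \<exists>h'. (h has_derivative h') (at z) \<and> (\<forall>c v. h' (csv c v) = csg c (h' v)))"

definition holo_gv :: "'k::finite grp set \<Rightarrow> ('k grp \<Rightarrow> 'k cvec) \<Rightarrow> bool" where
  "holo_gv Ob H \<longleftrightarrow> (\<forall>z\<in>Ob. \<exists>H'. (H has_derivative H') (at z) \<and> (\<forall>c v. H' (csg c v) = csv c (H' v)))"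

text \<open>Holomorphic chart of G/Gamma, given by its inverse psi : V -> G/Gamma (V open in C^(3k)):
  psi is a homeomorphism onto an open set which is holomorphic (locally lifts to
  holomorphic maps into G) with holomorphic inverse (psi^-1 o pi locally extends to
  a holomorphic map on an open subset of the ambient C^(4k)).\<close>
definition is_chart :: "'k::finite grp set \<Rightarrow> 'k cvec set \<Rightarrow> ('k cvec \<Rightarrow> 'k grp set) \<Rightarrow> bool" where
  "is_chart \<Gamma> V \<psi> \<longleftrightarrow> open V \<and> inj_on \<psi> V \<and> \<psi> ` V \<subseteq> quot \<Gamma> \<and> openin (qtop \<Gamma>) (\<psi> ` V) \<and>
     (\<forall>z\<in>V. \<exists>W h. open W \<and> z \<in> W \<and> W \<subseteq> V \<and> holo_vg W h \<and> h ` W \<subseteq> SLprod \<and>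
         (\<forall>w\<in>W. \<psi> w = lcoset (h w) \<Gamma>)) \<and>
     (\<forall>g\<in>SLprod. lcoset g \<Gamma> \<in> \<psi> ` V \<longrightarrow>
        (\<exists>Ob H. open Ob \<and> g \<in> Ob \<and> holo_gv Ob H \<and>
           (\<forall>g'\<in>Ob \<inter> SLprod. lcoset g' \<Gamma> \<in> \<psi> ` V \<longrightarrow> H g' \<in> V \<and> \<psi> (H g') = lcoset g' \<Gamma>)))"

definition cdot :: "'k::finite cvec \<Rightarrow> 'k cvec \<Rightarrow> complex" where
  "cdot a z = (\<Sum>i\<in>UNIV. \<Sum>j\<in>UNIV. a$i$j * z$i$j)"

definition hnbhd :: "'k::finite cvec \<Rightarrow> complex \<Rightarrow> real \<Rightarrow> 'k cvec set" where
  "hnbhd a c \<delta> = {z. infdist z {w. cdot a w = c} < \<delta>}"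

text \<open>A strategy for A maps the history of B's balls (center, radius) to (a, c, delta).\<close>
definition legal_strategy :: "real \<Rightarrow> (('k::finite cvec \<times> real) list \<Rightarrow> 'k cvec \<times> complex \<times> real) \<Rightarrow> bool" where
  "legal_strategy \<beta> \<sigma> \<longleftrightarrow> (\<forall>hist. hist \<noteq> [] \<longrightarrow> snd (last hist) > 0 \<longrightarrow>
     (case \<sigma> hist of (a, c, \<delta>) \<Rightarrow> a \<noteq> 0 \<and> 0 < \<delta> \<and> \<delta> \<le> \<beta> * snd (last hist)))"

definition consistent_play :: "'k::finite cvec set \<Rightarrow> real \<Rightarrow> (('k cvec \<times> real) list \<Rightarrow> 'k cvec \<times> complex \<times> real)
     \<Rightarrow> (nat \<Rightarrow> 'k cvec \<times> real) \<Rightarrow> bool" where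
  "consistent_play \<Omega> \<beta> \<sigma> b \<longleftrightarrow> snd (b 0) > 0 \<and> cball (fst (b 0)) (snd (b 0)) \<subseteq> \<Omega> \<and>
     (\<forall>j. cball (fst (b (Suc j))) (snd (b (Suc j))) \<subseteq> cball (fst (b j)) (snd (b j)) \<and>
          snd (b (Suc j)) \<ge> \<beta> * snd (b j) \<and>
          (case \<sigma> (map b [0..<Suc j]) of (a, c, \<delta>) \<Rightarrow>
             cball (fst (b (Suc j))) (snd (b (Suc j))) \<inter> hnbhd a c \<delta> = {}))"

definition HAW_on :: "'k::finite cvec set \<Rightarrow> 'k cvec set \<Rightarrow> bool" where
  "HAW_on \<Omega> E \<longleftrightarrow> (\<forall>\<beta>. 0 < \<beta> \<and> \<beta> < 1/3 \<longrightarrow>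
     (\<exists>\<sigma>. legal_strategy \<beta> \<sigma> \<and>
        (\<forall>b. consistent_play \<Omega> \<beta> \<sigma> b \<longrightarrow> E \<inter> (\<Inter>j. cball (fst (b j)) (snd (b j))) \<noteq> {})))"

definition HAW_quot :: "'k::finite grp set \<Rightarrow> 'k grp set set \<Rightarrow> bool" where
  "HAW_quot \<Gamma> E \<longleftrightarrow> (\<forall>V \<psi>. is_chart \<Gamma> V \<psi> \<longrightarrow> HAW_on V {z \<in> V. \<psi> z \<in> E})"

end

theory Submission
  imports Defs
begin

definition adjm :: "complex^2^2 \<Rightarrow> complex^2^2" where
  "adjm A = (\<chi> j l. if j = 1 then (if l = 1 then A$2$2 else - A$1$2)
                     else (if l = 1 then - A$2$1 else A$1$1))"

definition ginv :: "'k::finite grp \<Rightarrow> 'k grp" where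
  "ginv g = (\<chi> i. adjm (g$i))"

lemma adjm_left: "det A = 1 \<Longrightarrow> adjm A ** A = mat 1"
  unfolding adjm_def
  by (auto simp: vec_eq_iff forall_2 matrix_matrix_mult_def sum_2 det_2 mat_def algebra_simps)

lemma adjm_right: "det A = 1 \<Longrightarrow> A ** adjm A = mat 1"
  unfolding adjm_def
  by (auto simp: vec_eq_iff forall_2 matrix_matrix_mult_def sum_2 det_2 mat_def algebra_simps)

lemma adjm_det: "det A = 1 \<Longrightarrow> det (adjm A) = 1"
  unfolding adjm_def by (simp add: det_2 algebra_simps)

lemma gmul_assoc: "gmul a (gmul b c) = gmul (gmul a b) c"
  by (simp add: gmul_def matrix_mul_assoc)

lemma gmul_gone [simp]: "gmul gone g = g" "gmul g gone = g"
  by (simp_all add: gmul_def gone_def vec_eq_iff)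

lemma gone_SL [simp]: "gone \<in> SLprod"
  by (simp add: SLprod_def gone_def)

lemma gmul_SL: "a \<in> SLprod \<Longrightarrow> b \<in> SLprod \<Longrightarrow> gmul a b \<in> SLprod"
  by (simp add: SLprod_def gmul_def det_mul)

lemma ginv_SL: "a \<in> SLprod \<Longrightarrow> ginv a \<in> SLprod"
  by (simp add: SLprod_def ginv_def adjm_det)

lemma ginv_left: "a \<in> SLprod \<Longrightarrow> gmul (ginv a) a = gone"
  by (simp add: SLprod_def ginv_def gmul_def gone_def adjm_left vec_eq_iff)

lemma ginv_right: "a \<in> SLprod \<Longrightarrow> gmul a (ginv a) = gone"
  by (simp add: SLprod_def ginv_def gmul_def gone_def adjm_right vec_eq_iff)

lemma subgroup_ginv:
  assumes "is_subgroup H" "x \<in> H" shows "ginv x \<in> H"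
proof -
  from assms obtain y where y: "y \<in> H" "gmul x y = gone" unfolding is_subgroup_def by blast
  have xS: "x \<in> SLprod" using assms unfolding is_subgroup_def by blast
  have "y = gmul (gmul (ginv x) x) y" using xS by (simp add: ginv_left)
  also have "\<dots> = ginv x" using y by (simp flip: gmul_assoc)
  finally show ?thesis using y by simp
qed

lemma subgroup_mul: "is_subgroup H \<Longrightarrow> x \<in> H \<Longrightarrow> y \<in> H \<Longrightarrow> gmul x y \<in> H"
  unfolding is_subgroup_def by blast

lemma subgroup_SL: "is_subgroup H \<Longrightarrow> x \<in> H \<Longrightarrow> x \<in> SLprod"
  unfolding is_subgroup_def by blast

lemma subgroup_one: "is_subgroup H \<Longrightarrow> gone \<in> H"
  unfolding is_subgroup_def by blast

lemma subgroup_Int: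
  assumes "is_subgroup H" "is_subgroup K" shows "is_subgroup (H \<inter> K)"
proof -
  have "\<forall>x\<in>H \<inter> K. \<exists>y\<in>H \<inter> K. gmul x y = gone"
  proof
    fix x assume x: "x \<in> H \<inter> K"
    then have "ginv x \<in> H \<inter> K" using assms subgroup_ginv by blast
    moreover have "gmul x (ginv x) = gone" using x assms subgroup_SL ginv_right by blast
    ultimately show "\<exists>y\<in>H \<inter> K. gmul x y = gone" by blast
  qed
  then show ?thesis using assms unfolding is_subgroup_def by blast
qed

lemma subgroup_translate: "is_subgroup H \<Longrightarrow> g \<in> H \<Longrightarrow> gmul g ` H = H"
proof
  assume a: "is_subgroup H" "g \<in> H"
  show "gmul g ` H \<subseteq> H" using a subgroup_mul by blast
  show "H \<subseteq> gmul g ` H"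
  proof
    fix h assume h: "h \<in> H"
    have "h = gmul g (gmul (ginv g) h)"
      using a by (simp add: gmul_assoc ginv_right subgroup_SL)
    moreover have "gmul (ginv g) h \<in> H" using a h subgroup_ginv subgroup_mul by blast
    ultimately show "h \<in> gmul g ` H" by blast
  qed
qed

lemma lcoset_mul: "is_subgroup H \<Longrightarrow> \<gamma> \<in> H \<Longrightarrow> lcoset (gmul g \<gamma>) H = lcoset g H"
  unfolding lcoset_def
  by (metis (no_types, lifting) gmul_assoc image_cong image_image subgroup_translate)

lemma lcoset_eq:
  assumes "is_subgroup H"
  shows "lcoset g H = lcoset g' H \<longleftrightarrow> (\<exists>\<gamma>\<in>H. g' = gmul g \<gamma>)"
proof
  assume "lcoset g H = lcoset g' H"
  moreover have "g' \<in> lcoset g' H" unfolding lcoset_def using assms subgroup_one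
    by (metis gmul_gone(2) image_eqI)
  ultimately show "\<exists>\<gamma>\<in>H. g' = gmul g \<gamma>" unfolding lcoset_def by auto
next
  assume "\<exists>\<gamma>\<in>H. g' = gmul g \<gamma>"
  then show "lcoset g H = lcoset g' H" using lcoset_mul[OF assms] by metis
qed

lemma act_lcoset: "act f (lcoset g H) = lcoset (gmul f g) H"
  unfolding act_def lcoset_def by (auto simp: gmul_assoc image_image)

lemma lcoset_in_quot: "g \<in> SLprod \<Longrightarrow> lcoset g H \<in> quot H"
  unfolding quot_def by blast

lemma linear_gmul_left: "linear (\<lambda>x. gmul x b)"
  by (rule linearI) (simp_all add: gmul_def vec_eq_iff matrix_matrix_mult_def sum.distrib
       algebra_simps scaleR_sum_right)

lemma linear_gmul_right: "linear (\<lambda>x. gmul b x)"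
  by (rule linearI) (simp_all add: gmul_def vec_eq_iff matrix_matrix_mult_def sum.distrib
       algebra_simps scaleR_sum_right)

lemma linear_ginv: "linear ginv"
  by (rule linearI) (simp_all add: ginv_def adjm_def vec_eq_iff)

lemma bb_gmul: "bounded_bilinear gmul"
  using bilinear_conv_bounded_bilinear linear_gmul_left linear_gmul_right
  unfolding bilinear_def by blast

lemma bl_ginv: "bounded_linear ginv"
  using linear_ginv linear_conv_bounded_linear by blast

lemma bl_gmul_left: "bounded_linear (\<lambda>x. gmul x b)"
  using linear_gmul_left linear_conv_bounded_linear by blast

lemma cont_gmul_left: "continuous_on A (\<lambda>x. gmul x b)"
  by (intro linear_continuous_on bl_gmul_left)

lemma istop_q: "istopology (\<lambda>U. U \<subseteq> quot H \<and> openin (top_of_set SLprod) {g \<in> SLprod. lcoset g H \<in> U})"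
proof -
  have 1: "S \<inter> T \<subseteq> quot H \<and> openin (top_of_set SLprod) {g \<in> SLprod. lcoset g H \<in> S \<inter> T}"
    if a: "S \<subseteq> quot H" "openin (top_of_set SLprod) {g \<in> SLprod. lcoset g H \<in> S}"
            "T \<subseteq> quot H" "openin (top_of_set SLprod) {g \<in> SLprod. lcoset g H \<in> T}" for S T
  proof -
    have "{g \<in> SLprod. lcoset g H \<in> S \<inter> T} = {g \<in> SLprod. lcoset g H \<in> S} \<inter> {g \<in> SLprod. lcoset g H \<in> T}"
      by auto
    then show ?thesis using a openin_Int by auto
  qed
  have 2: "\<Union>K \<subseteq> quot H \<and> openin (top_of_set SLprod) {g \<in> SLprod. lcoset g H \<in> \<Union>K}"
    if a: "\<forall>S\<in>K. S \<subseteq> quot H \<and> openin (top_of_set SLprod) {g \<in> SLprod. lcoset g H \<in> S}" for K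
  proof -
    have "{g \<in> SLprod. lcoset g H \<in> \<Union>K} = (\<Union>S\<in>K. {g \<in> SLprod. lcoset g H \<in> S})" by auto
    moreover have "openin (top_of_set SLprod) (\<Union>S\<in>K. {g \<in> SLprod. lcoset g H \<in> S})"
      using a by (intro openin_Union) auto
    ultimately show ?thesis using a by auto
  qed
  show ?thesis unfolding istopology_def using 1 2 by auto
qed

lemma openin_qtop: "openin (qtop H) U \<longleftrightarrow> U \<subseteq> quot H \<and> openin (top_of_set SLprod) {g \<in> SLprod. lcoset g H \<in> U}"
  unfolding qtop_def topology_inverse'[OF istop_q] by (rule refl)

lemma topspace_qtop [simp]: "topspace (qtop H) = quot H"
proof -
  have e: "{g \<in> SLprod. lcoset g H \<in> quot H} = SLprod" using lcoset_in_quot by blast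
  have "openin (qtop H) (quot H)"
    unfolding openin_qtop e by simp
  then have "quot H \<subseteq> topspace (qtop H)" by (rule openin_subset)
  moreover have "topspace (qtop H) \<subseteq> quot H"
    using openin_topspace[of "qtop H"] unfolding openin_qtop by blast
  ultimately show ?thesis by blast
qed

lemma closedin_qtop: "closedin (qtop H) C \<longleftrightarrow> C \<subseteq> quot H \<and> closedin (top_of_set SLprod) {g \<in> SLprod. lcoset g H \<in> C}"
proof -
  have e: "{g \<in> SLprod. lcoset g H \<in> quot H - C} = SLprod - {g \<in> SLprod. lcoset g H \<in> C}"
    using lcoset_in_quot by auto
  show ?thesis
    unfolding closedin_def openin_qtop topspace_qtop e
    by (auto simp: closedin_def)
qed

lemma cont_Phi: "continuous (at p) (\<lambda>p. gmul (ginv (fst p)) (snd p))"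
proof -
  have "((\<lambda>p. gmul (ginv (fst p)) (snd p)) \<longlongrightarrow> gmul (ginv (fst p)) (snd p)) (at p)"
    by (rule bounded_bilinear.tendsto[OF bb_gmul, OF bounded_linear.tendsto[OF bl_ginv,
          OF tendsto_fst[OF tendsto_ident_at]] tendsto_snd[OF tendsto_ident_at]])
  then show ?thesis by (simp add: continuous_at)
qed

lemma discrete_near:
  assumes "discrete_subgroup \<Gamma>" "g0 \<in> SLprod"
  obtains r where "r > 0"
    "\<And>a b \<gamma>. a \<in> SLprod \<Longrightarrow> dist a g0 < r \<Longrightarrow> dist b g0 < r \<Longrightarrow> \<gamma> \<in> \<Gamma> \<Longrightarrow> b = gmul a \<gamma> \<Longrightarrow> a = b"
proof -
  have sg: "is_subgroup \<Gamma>" using assms unfolding discrete_subgroup_def by blast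
  then have "gone \<in> \<Gamma>" by (rule subgroup_one)
  then obtain e where e: "e > 0" "\<And>\<gamma>'. \<gamma>' \<in> \<Gamma> \<Longrightarrow> dist \<gamma>' gone < e \<Longrightarrow> \<gamma>' = gone"
    using assms unfolding discrete_subgroup_def by blast
  obtain d where d: "d > 0" "\<And>p. dist p (g0, g0) < d \<Longrightarrow>
      dist (gmul (ginv (fst p)) (snd p)) (gmul (ginv (fst (g0,g0))) (snd (g0,g0))) < e"
    using cont_Phi[of "(g0,g0)"] e(1) unfolding continuous_at_eps_delta by blast
  have v0: "gmul (ginv (fst (g0,g0))) (snd (g0,g0)) = gone" using assms(2) by (simp add: ginv_left)
  show ?thesis
  proof (rule that[of "d/2"])
    show "d/2 > 0" using d by simp
    fix a b \<gamma> assume h: "a \<in> SLprod" "dist a g0 < d/2" "dist b g0 < d/2" "\<gamma> \<in> \<Gamma>" "b = gmul a \<gamma>"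
    have "dist (a,b) (g0,g0) < d"
    proof -
      have "dist (a,b) (g0,g0) = sqrt ((dist a g0)\<^sup>2 + (dist b g0)\<^sup>2)" by (simp add: dist_Pair_Pair)
      also have "\<dots> \<le> \<bar>dist a g0\<bar> + \<bar>dist b g0\<bar>" by (rule sqrt_sum_squares_le_sum_abs)
      also have "\<dots> < d" using h by simp
      finally show ?thesis .
    qed
    then have "dist (gmul (ginv a) b) gone < e" using d(2)[of "(a,b)"] v0 by simp
    moreover have "gmul (ginv a) b = \<gamma>" using h by (simp add: gmul_assoc ginv_left)
    ultimately have "\<gamma> = gone" using e h by blast
    then show "a = b" using h by simp
  qed
qed

definition proj :: "'k::finite grp set \<Rightarrow> 'k grp set \<Rightarrow> 'k grp set" where
  "proj \<Gamma> X = (\<Union>x\<in>X. lcoset x \<Gamma>)"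

locale cover =
  fixes \<Delta> \<Gamma> :: "'k::finite grp set"
  assumes sD: "is_subgroup \<Delta>" and sG: "is_subgroup \<Gamma>" and sub: "\<Delta> \<subseteq> \<Gamma>"
    and fi: "finite_index \<Delta> \<Gamma>"
begin

lemma proj_lcoset: "proj \<Gamma> (lcoset g \<Delta>) = lcoset g \<Gamma>"
proof -
  have "proj \<Gamma> (lcoset g \<Delta>) = (\<Union>\<delta>\<in>\<Delta>. lcoset (gmul g \<delta>) \<Gamma>)"
    unfolding proj_def lcoset_def by auto
  also have "\<dots> = (\<Union>\<delta>\<in>\<Delta>. lcoset g \<Gamma>)"
    using lcoset_mul[OF sG] sub by auto
  also have "\<dots> = lcoset g \<Gamma>" using subgroup_one[OF sD] by auto
  finally show ?thesis .
qed

lemma proj_quot: "X \<in> quot \<Delta> \<Longrightarrow> proj \<Gamma> X \<in> quot \<Gamma>"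
  unfolding quot_def using proj_lcoset by auto

lemma cont_proj: "continuous_map (qtop \<Delta>) (qtop \<Gamma>) (proj \<Gamma>)"
  unfolding continuous_map
proof (intro conjI allI impI)
  show "proj \<Gamma> ` topspace (qtop \<Delta>) \<subseteq> topspace (qtop \<Gamma>)" using proj_quot by auto
  fix U assume U: "openin (qtop \<Gamma>) U"
  have e: "{g \<in> SLprod. lcoset g \<Delta> \<in> {x \<in> topspace (qtop \<Delta>). proj \<Gamma> x \<in> U}}
      = {g \<in> SLprod. lcoset g \<Gamma> \<in> U}"
    using proj_lcoset lcoset_in_quot by auto
  show "openin (qtop \<Delta>) {x \<in> topspace (qtop \<Delta>). proj \<Gamma> x \<in> U}"
    unfolding openin_qtop e using U unfolding openin_qtop by auto
qed

lemma reps: obtains R where "finite R" "R \<subseteq> \<Gamma>" "\<And>\<gamma>. \<gamma> \<in> \<Gamma> \<Longrightarrow> \<exists>\<rho>\<in>R. \<exists>\<delta>\<in>\<Delta>. \<gamma> = gmul \<rho> \<delta>"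
proof -
  have "finite ((\<lambda>g. lcoset g \<Delta>) ` \<Gamma>)" using fi unfolding finite_index_def
    by (simp add: image_def Setcompr_eq_image)
  then obtain R where R: "R \<subseteq> \<Gamma>" "finite R" "(\<lambda>g. lcoset g \<Delta>) ` \<Gamma> = (\<lambda>g. lcoset g \<Delta>) ` R"
    using finite_subset_image[of "(\<lambda>g. lcoset g \<Delta>) ` \<Gamma>" "\<lambda>g. lcoset g \<Delta>" \<Gamma>] by blast
  show ?thesis
  proof (rule that[OF R(2,1)])
    fix \<gamma> assume "\<gamma> \<in> \<Gamma>"
    then obtain \<rho> where "\<rho> \<in> R" "lcoset \<gamma> \<Delta> = lcoset \<rho> \<Delta>" using R(3) by blast
    then show "\<exists>\<rho>\<in>R. \<exists>\<delta>\<in>\<Delta>. \<gamma> = gmul \<rho> \<delta>" using lcoset_eq[OF sD] by metis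
  qed
qed

lemma closed_proj: "closed_map (qtop \<Delta>) (qtop \<Gamma>) (proj \<Gamma>)"
  unfolding closed_map_def
proof (intro allI impI)
  fix C assume C: "closedin (qtop \<Delta>) C"
  obtain R where R: "finite R" "R \<subseteq> \<Gamma>" "\<And>\<gamma>. \<gamma> \<in> \<Gamma> \<Longrightarrow> \<exists>\<rho>\<in>R. \<exists>\<delta>\<in>\<Delta>. \<gamma> = gmul \<rho> \<delta>"
    using reps by blast
  define Ch where "Ch = {g \<in> SLprod. lcoset g \<Delta> \<in> C}"
  have Cq: "C \<subseteq> quot \<Delta>" and Chc: "closedin (top_of_set SLprod) Ch"
    using C unfolding closedin_qtop Ch_def by auto
  have e: "{g \<in> SLprod. lcoset g \<Gamma> \<in> proj \<Gamma> ` C} = (\<Union>\<rho>\<in>R. SLprod \<inter> (\<lambda>g. gmul g \<rho>) -` Ch)"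
  proof (intro equalityI subsetI)
    fix g assume g: "g \<in> {g \<in> SLprod. lcoset g \<Gamma> \<in> proj \<Gamma> ` C}"
    then obtain c where c: "c \<in> C" "lcoset g \<Gamma> = proj \<Gamma> c" by blast
    then obtain x where x: "x \<in> SLprod" "c = lcoset x \<Delta>" using Cq unfolding quot_def by blast
    have "lcoset g \<Gamma> = lcoset x \<Gamma>" using c x proj_lcoset by simp
    then obtain \<gamma> where \<gamma>: "\<gamma> \<in> \<Gamma>" "x = gmul g \<gamma>" using lcoset_eq[OF sG] by blast
    then obtain \<rho> \<delta> where \<rho>: "\<rho> \<in> R" "\<delta> \<in> \<Delta>" "\<gamma> = gmul \<rho> \<delta>" using R(3) by blast
    have "x = gmul (gmul g \<rho>) \<delta>" using \<gamma> \<rho> by (simp add: gmul_assoc)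
    then have "lcoset (gmul g \<rho>) \<Delta> = c" using x \<rho> lcoset_mul[OF sD] by simp
    moreover have "gmul g \<rho> \<in> SLprod" using g \<rho> R(2) subgroup_SL[OF sG] gmul_SL by blast
    ultimately show "g \<in> (\<Union>\<rho>\<in>R. SLprod \<inter> (\<lambda>g. gmul g \<rho>) -` Ch)"
      using g \<rho> c unfolding Ch_def by blast
  next
    fix g assume "g \<in> (\<Union>\<rho>\<in>R. SLprod \<inter> (\<lambda>g. gmul g \<rho>) -` Ch)"
    then obtain \<rho> where \<rho>: "\<rho> \<in> R" "g \<in> SLprod" "lcoset (gmul g \<rho>) \<Delta> \<in> C" unfolding Ch_def by blast
    have "proj \<Gamma> (lcoset (gmul g \<rho>) \<Delta>) = lcoset g \<Gamma>"
      using proj_lcoset lcoset_mul[OF sG] \<rho> R(2) by auto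
    then show "g \<in> {g \<in> SLprod. lcoset g \<Gamma> \<in> proj \<Gamma> ` C}" using \<rho> by force
  qed
  have "closedin (top_of_set SLprod) (\<Union>\<rho>\<in>R. SLprod \<inter> (\<lambda>g. gmul g \<rho>) -` Ch)"
  proof (intro closedin_Union)
    show "finite ((\<lambda>\<rho>. SLprod \<inter> (\<lambda>g. gmul g \<rho>) -` Ch) ` R)" using R by simp
    fix S assume "S \<in> (\<lambda>\<rho>. SLprod \<inter> (\<lambda>g. gmul g \<rho>) -` Ch) ` R"
    then obtain \<rho> where \<rho>: "\<rho> \<in> R" "S = SLprod \<inter> (\<lambda>g. gmul g \<rho>) -` Ch" by blast
    have "(\<lambda>g. gmul g \<rho>) \<in> SLprod \<rightarrow> SLprod"
      using \<rho> R(2) subgroup_SL[OF sG] gmul_SL by blast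
    then show "closedin (top_of_set SLprod) S"
      unfolding \<rho>(2) by (rule continuous_closedin_preimage_gen[OF cont_gmul_left _ Chc])
  qed
  moreover have "proj \<Gamma> ` C \<subseteq> quot \<Gamma>" using Cq proj_quot by blast
  ultimately show "closedin (qtop \<Gamma>) (proj \<Gamma> ` C)"
    unfolding closedin_qtop e by blast
qed

lemma proper_proj: "proper_map (qtop \<Delta>) (qtop \<Gamma>) (proj \<Gamma>)"
  unfolding proper_map_def
proof (intro conjI ballI closed_proj)
  fix Y assume "Y \<in> topspace (qtop \<Gamma>)"
  then obtain g where g: "g \<in> SLprod" "Y = lcoset g \<Gamma>" unfolding topspace_qtop quot_def by blast
  obtain R where R: "finite R" "R \<subseteq> \<Gamma>" "\<And>\<gamma>. \<gamma> \<in> \<Gamma> \<Longrightarrow> \<exists>\<rho>\<in>R. \<exists>\<delta>\<in>\<Delta>. \<gamma> = gmul \<rho> \<delta>"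
    using reps by blast
  have "{x \<in> topspace (qtop \<Delta>). proj \<Gamma> x = Y} \<subseteq> (\<lambda>\<rho>. lcoset (gmul g \<rho>) \<Delta>) ` R"
  proof
    fix x assume "x \<in> {x \<in> topspace (qtop \<Delta>). proj \<Gamma> x = Y}"
    then have "x \<in> quot \<Delta>" "proj \<Gamma> x = Y" by auto
    then obtain y where y: "y \<in> SLprod" "x = lcoset y \<Delta>" "proj \<Gamma> x = Y" unfolding quot_def by blast
    then have "lcoset g \<Gamma> = lcoset y \<Gamma>" using proj_lcoset g by simp
    then obtain \<gamma> where \<gamma>: "\<gamma> \<in> \<Gamma>" "y = gmul g \<gamma>" using lcoset_eq[OF sG] by blast
    then obtain \<rho> \<delta> where \<rho>: "\<rho> \<in> R" "\<delta> \<in> \<Delta>" "\<gamma> = gmul \<rho> \<delta>" using R(3) by blast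
    have "y = gmul (gmul g \<rho>) \<delta>" using \<gamma> \<rho> by (simp add: gmul_assoc)
    then have "x = lcoset (gmul g \<rho>) \<Delta>" using y \<rho> lcoset_mul[OF sD] by simp
    then show "x \<in> (\<lambda>\<rho>. lcoset (gmul g \<rho>) \<Delta>) ` R" using \<rho> by blast
  qed
  then have "finite {x \<in> topspace (qtop \<Delta>). proj \<Gamma> x = Y}" using R(1) finite_subset by blast
  then show "compactin (qtop \<Delta>) {x \<in> topspace (qtop \<Delta>). proj \<Gamma> x = Y}"
    by (intro finite_imp_compactin) auto
qed

lemma orbit_proj:
  assumes "F \<subseteq> SLprod" "g \<in> SLprod"
  shows "proj \<Gamma> ` ((\<lambda>f. act f (lcoset g \<Delta>)) ` F) = (\<lambda>f. act f (lcoset g \<Gamma>)) ` F"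
  by (auto simp: act_lcoset proj_lcoset image_image)

lemma orbit_sub: "F \<subseteq> SLprod \<Longrightarrow> g \<in> SLprod \<Longrightarrow> (\<lambda>f. act f (lcoset g H)) ` F \<subseteq> quot H"
  by (auto simp: act_lcoset intro!: lcoset_in_quot gmul_SL)

lemma Ebdd_cover:
  assumes F: "F \<subseteq> SLprod" and g: "g \<in> SLprod"
  shows "lcoset g \<Delta> \<in> Ebdd F \<Delta> \<longleftrightarrow> lcoset g \<Gamma> \<in> Ebdd F \<Gamma>"
proof -
  define SD where "SD = (\<lambda>f. act f (lcoset g \<Delta>)) ` F"
  define SG where "SG = (\<lambda>f. act f (lcoset g \<Gamma>)) ` F"
  have SGe: "SG = proj \<Gamma> ` SD" unfolding SD_def SG_def using orbit_proj[OF F g] by simp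
  have SDq: "SD \<subseteq> quot \<Delta>" and SGq: "SG \<subseteq> quot \<Gamma>"
    unfolding SD_def SG_def using orbit_sub[OF F g] by auto
  have iff: "compactin (qtop \<Delta>) (qtop \<Delta> closure_of SD) \<longleftrightarrow> compactin (qtop \<Gamma>) (qtop \<Gamma> closure_of SG)"
  proof
    assume cD: "compactin (qtop \<Delta>) (qtop \<Delta> closure_of SD)"
    have c1: "compactin (qtop \<Gamma>) (proj \<Gamma> ` (qtop \<Delta> closure_of SD))"
      by (rule image_compactin[OF cD cont_proj])
    have c2: "closedin (qtop \<Gamma>) (proj \<Gamma> ` (qtop \<Delta> closure_of SD))"
      using closed_proj unfolding closed_map_def by simp
    have "SG \<subseteq> proj \<Gamma> ` (qtop \<Delta> closure_of SD)"
      unfolding SGe using closure_of_subset[of SD "qtop \<Delta>"] SDq by auto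
    then have "qtop \<Gamma> closure_of SG \<subseteq> proj \<Gamma> ` (qtop \<Delta> closure_of SD)"
      using c2 closure_of_minimal by blast
    then show "compactin (qtop \<Gamma>) (qtop \<Gamma> closure_of SG)"
      using closed_compactin[OF c1] closedin_closure_of by blast
  next
    assume cG: "compactin (qtop \<Gamma>) (qtop \<Gamma> closure_of SG)"
    define P where "P = {x. x \<in> topspace (qtop \<Delta>) \<and> proj \<Gamma> x \<in> qtop \<Gamma> closure_of SG}"
    have c1: "compactin (qtop \<Delta>) P"
      unfolding P_def by (rule compactin_proper_map_preimage[OF proper_proj cG])
    have c2: "closedin (qtop \<Delta>) P"
      unfolding P_def using closedin_continuous_map_preimage[OF cont_proj closedin_closure_of]
      by simp
    have "SD \<subseteq> P" unfolding P_def using SDq SGe closure_of_subset[of SG "qtop \<Gamma>"] SGq by auto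
    then have "qtop \<Delta> closure_of SD \<subseteq> P" using c2 closure_of_minimal by blast
    then show "compactin (qtop \<Delta>) (qtop \<Delta> closure_of SD)"
      using closed_compactin[OF c1] closedin_closure_of by blast
  qed
  show ?thesis unfolding Ebdd_def using iff lcoset_in_quot[OF g] SD_def SG_def by simp
qed

end

lemma center_in_hnbhd: "0 < \<delta> \<Longrightarrow> c \<in> hnbhd a (cdot a c) \<delta>"
  unfolding hnbhd_def by simp

lemma dummy_shrink:
  fixes c c' :: "'k::finite cvec"
  assumes "cball c' r' \<subseteq> cball c r" "cball c' r' \<inter> hnbhd a (cdot a c) \<delta> = {}" "0 < \<delta>" "0 < r'"
  shows "r' \<le> r / 2"
proof (rule ccontr)
  assume "\<not> r' \<le> r / 2"
  have "dist c' c + r' \<le> r \<or> r' < 0" using assms(1) cball_subset_cball_iff by blast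
  then have "dist c' c + r' \<le> r" using assms(4) by simp
  then have "dist c' c \<le> r'" using \<open>\<not> r' \<le> r / 2\<close> by simp
  then have "c \<in> cball c' r'" by simp
  then show False using assms(2) center_in_hnbhd[OF assms(3)] by blast
qed

lemma HAW_local:
  fixes V S :: "'k::finite cvec set"
  assumes loc: "\<And>z. z \<in> V \<Longrightarrow> \<exists>W T. open W \<and> z \<in> W \<and> W \<subseteq> V \<and> T \<subseteq> S \<and> HAW_on W T"
  shows "HAW_on V S"
  unfolding HAW_on_def
proof (intro allI impI)
  fix \<beta> :: real assume \<beta>: "0 < \<beta> \<and> \<beta> < 1/3"
  obtain Wf Tf where WT: "\<And>z. z \<in> V \<Longrightarrow> open (Wf z) \<and> z \<in> Wf z \<and> Wf z \<subseteq> V \<and> Tf z \<subseteq> S \<and> HAW_on (Wf z) (Tf z)"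
    using loc by metis
  define \<sigma>f where "\<sigma>f z = (SOME \<sigma>. legal_strategy \<beta> \<sigma> \<and>
        (\<forall>b. consistent_play (Wf z) \<beta> \<sigma> b \<longrightarrow> Tf z \<inter> (\<Inter>j. cball (fst (b j)) (snd (b j))) \<noteq> {}))" for z
  have \<sigma>f: "legal_strategy \<beta> (\<sigma>f z) \<and>
        (\<forall>b. consistent_play (Wf z) \<beta> (\<sigma>f z) b \<longrightarrow> Tf z \<inter> (\<Inter>j. cball (fst (b j)) (snd (b j))) \<noteq> {})"
    if "z \<in> V" for z
  proof -
    have "\<exists>\<sigma>. legal_strategy \<beta> \<sigma> \<and>
        (\<forall>b. consistent_play (Wf z) \<beta> \<sigma> b \<longrightarrow> Tf z \<inter> (\<Inter>j. cball (fst (b j)) (snd (b j))) \<noteq> {})"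
      using WT[OF that] \<beta> unfolding HAW_on_def by blast
    then show ?thesis unfolding \<sigma>f_def by (rule someI_ex)
  qed
  define P where "P hist i \<longleftrightarrow> i < length hist \<and> (\<exists>z\<in>V. cball (fst (hist!i)) (snd (hist!i)) \<subseteq> Wf z)"
    for hist :: "('k cvec \<times> real) list" and i
  define zc where "zc hist i = (SOME z. z \<in> V \<and> cball (fst (hist!i)) (snd (hist!i)) \<subseteq> Wf z)"
    for hist :: "('k cvec \<times> real) list" and i
  define a1 :: "'k cvec" where "a1 = (\<chi> i j. 1)"
  have a1: "a1 \<noteq> 0" unfolding a1_def by (simp add: vec_eq_iff)
  define \<sigma> where "\<sigma> hist = (if \<exists>i. P hist i then
        \<sigma>f (zc hist (LEAST i. P hist i)) (drop (LEAST i. P hist i) hist)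
      else (a1, cdot a1 (fst (last hist)), \<beta> * snd (last hist)))" for hist
  have zc: "zc hist i \<in> V \<and> cball (fst (hist!i)) (snd (hist!i)) \<subseteq> Wf (zc hist i)" if "P hist i" for hist i
    using that unfolding P_def zc_def by (metis (mono_tags, lifting) someI_ex)
  have legal: "legal_strategy \<beta> \<sigma>"
    unfolding legal_strategy_def
  proof (intro allI impI)
    fix hist :: "('k cvec \<times> real) list" assume h: "hist \<noteq> []" "0 < snd (last hist)"
    show "case \<sigma> hist of (a, c, \<delta>) \<Rightarrow> a \<noteq> 0 \<and> 0 < \<delta> \<and> \<delta> \<le> \<beta> * snd (last hist)"
    proof (cases "\<exists>i. P hist i")
      case True
      define i0 where "i0 = (LEAST i. P hist i)"
      have Pi0: "P hist i0" unfolding i0_def using True by (rule LeastI_ex)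
      then have z: "zc hist i0 \<in> V" using zc by blast
      have len: "i0 < length hist" using Pi0 unfolding P_def by simp
      have d: "drop i0 hist \<noteq> []" "last (drop i0 hist) = last hist" using len by auto
      have L: "legal_strategy \<beta> (\<sigma>f (zc hist i0))" using \<sigma>f[OF z] by blast
      have "case \<sigma>f (zc hist i0) (drop i0 hist) of (a, c, \<delta>) \<Rightarrow> a \<noteq> 0 \<and> 0 < \<delta> \<and> \<delta> \<le> \<beta> * snd (last (drop i0 hist))"
        using L[unfolded legal_strategy_def, rule_format, of "drop i0 hist"] d h by simp
      moreover have "\<sigma> hist = \<sigma>f (zc hist i0) (drop i0 hist)" using True unfolding \<sigma>_def i0_def by simp
      ultimately show ?thesis using d by simp
    next
      case False
      then have nE: "\<not> Ex (P hist)" by blast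
      have "\<sigma> hist = (a1, cdot a1 (fst (last hist)), \<beta> * snd (last hist))"
        unfolding \<sigma>_def by (simp only: nE if_False)
      then show ?thesis using h a1 \<beta> by simp
    qed
  qed
  show "\<exists>\<sigma>. legal_strategy \<beta> \<sigma> \<and>
         (\<forall>b. consistent_play V \<beta> \<sigma> b \<longrightarrow> S \<inter> (\<Inter>j. cball (fst (b j)) (snd (b j))) \<noteq> {})"
  proof (intro exI conjI allI impI)
    show "legal_strategy \<beta> \<sigma>" by (rule legal)
    fix b assume cp: "consistent_play V \<beta> \<sigma> b"
    define B where "B j = cball (fst (b j)) (snd (b j))" for j
    have cp0: "0 < snd (b 0)" "B 0 \<subseteq> V" using cp unfolding consistent_play_def B_def by auto
    have cpS: "B (Suc j) \<subseteq> B j" "\<beta> * snd (b j) \<le> snd (b (Suc j))"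
      "case \<sigma> (map b [0..<Suc j]) of (a, c, \<delta>) \<Rightarrow> B (Suc j) \<inter> hnbhd a c \<delta> = {}" for j
      using cp unfolding consistent_play_def B_def by auto
    have pos: "0 < snd (b j)" for j
    proof (induction j)
      case 0 then show ?case using cp0 by simp
    next
      case (Suc j) then show ?case using cpS(2)[of j] \<beta> by (smt (verit) mult_pos_pos)
    qed
    have nest: "m \<le> n \<Longrightarrow> B n \<subseteq> B m" for m n
      using lift_Suc_antimono_le[of B, OF cpS(1)] by blast
    define Q where "Q i \<longleftrightarrow> (\<exists>z\<in>V. B i \<subseteq> Wf z)" for i
    have hnth: "map b [0..<Suc j] ! i = b i" if "i \<le> j" for i j
      using that by (simp del: upt_Suc add: nth_map_upt)
    have PQ: "P (map b [0..<Suc j]) i \<longleftrightarrow> i \<le> j \<and> Q i" for i j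
      unfolding P_def Q_def B_def using hnth by (auto simp del: upt_Suc; blast)
    have lasth: "last (map b [0..<Suc j]) = b j" for j by simp
    show "S \<inter> (\<Inter>j. cball (fst (b j)) (snd (b j))) \<noteq> {}"
    proof (cases "\<exists>i. Q i")
      case True
      define i0 where "i0 = (LEAST i. Q i)"
      have Qi0: "Q i0" unfolding i0_def using True by (rule LeastI_ex)
      have least: "(LEAST i. P (map b [0..<Suc j]) i) = i0" if "i0 \<le> j" for j
      proof (rule Least_equality)
        show "P (map b [0..<Suc j]) i0" using PQ Qi0 that by simp
        fix i assume "P (map b [0..<Suc j]) i"
        then have "Q i" using PQ by simp
        then show "i0 \<le> i" unfolding i0_def by (rule Least_le)
      qed
      define z0 where "z0 = zc (map b [0..<Suc i0]) i0"
      have zcj: "zc (map b [0..<Suc j]) i0 = z0" if "i0 \<le> j" for j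
        unfolding z0_def zc_def using hnth that by (simp del: upt_Suc)
      have z0: "z0 \<in> V" "B i0 \<subseteq> Wf z0"
        using zc[of "map b [0..<Suc i0]" i0] PQ Qi0 hnth unfolding z0_def B_def
        by (auto simp del: upt_Suc)
      define b' where "b' k = b (i0 + k)" for k
      have dropeq: "drop i0 (map b [0..<Suc (i0 + k)]) = map b' [0..<Suc k]" for k
        by (rule nth_equalityI) (auto simp: b'_def simp del: upt_Suc)
      have sig: "\<sigma> (map b [0..<Suc (i0 + k)]) = \<sigma>f z0 (map b' [0..<Suc k])" for k
      proof -
        have "P (map b [0..<Suc (i0 + k)]) i0" using PQ Qi0 by simp
        then have "\<exists>i. P (map b [0..<Suc (i0 + k)]) i" by blast
        then show ?thesis unfolding \<sigma>_def using least[of "i0+k"] zcj[of "i0+k"] dropeq[of k] by simp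
      qed
      have cp': "consistent_play (Wf z0) \<beta> (\<sigma>f z0) b'"
        unfolding consistent_play_def
      proof (intro conjI allI)
        show "0 < snd (b' 0)" using pos by (simp add: b'_def)
        show "cball (fst (b' 0)) (snd (b' 0)) \<subseteq> Wf z0" using z0 by (simp add: b'_def B_def)
        fix k
        show "cball (fst (b' (Suc k))) (snd (b' (Suc k))) \<subseteq> cball (fst (b' k)) (snd (b' k))"
          using cpS(1)[of "i0+k"] by (simp add: b'_def B_def)
        show "\<beta> * snd (b' k) \<le> snd (b' (Suc k))"
          using cpS(2)[of "i0+k"] by (simp add: b'_def)
        show "case \<sigma>f z0 (map b' [0..<Suc k]) of (a, c, \<delta>) \<Rightarrow>
            cball (fst (b' (Suc k))) (snd (b' (Suc k))) \<inter> hnbhd a c \<delta> = {}"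
          using cpS(3)[of "i0+k"] sig[of k] by (simp add: b'_def B_def del: upt_Suc)
      qed
      have "Tf z0 \<inter> (\<Inter>k. cball (fst (b' k)) (snd (b' k))) \<noteq> {}"
        using \<sigma>f[OF z0(1)] cp' by blast
      moreover have "(\<Inter>k. cball (fst (b' k)) (snd (b' k))) \<subseteq> (\<Inter>j. B j)"
      proof
        fix x assume "x \<in> (\<Inter>k. cball (fst (b' k)) (snd (b' k)))"
        then have x: "x \<in> B (i0 + k)" for k unfolding b'_def B_def by blast
        show "x \<in> (\<Inter>j. B j)"
        proof
          fix j
          show "x \<in> B j"
          proof (cases "j \<le> i0")
            case True
            then show ?thesis using x[of 0] nest[OF True] by auto
          next
            case False
            then have "j = i0 + (j - i0)" by simp
            then show ?thesis using x[of "j - i0"] by metis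
          qed
        qed
      qed
      moreover have "Tf z0 \<subseteq> S" using WT[OF z0(1)] by blast
      ultimately show ?thesis unfolding B_def by blast
    next
      case False
      have sigd: "\<sigma> (map b [0..<Suc j]) = (a1, cdot a1 (fst (b j)), \<beta> * snd (b j))" for j
      proof -
        have nE: "\<not> Ex (P (map b [0..<Suc j]))" using False PQ by blast
        show ?thesis unfolding \<sigma>_def by (simp only: nE if_False lasth)
      qed
      have half: "snd (b (Suc j)) \<le> snd (b j) / 2" for j
        using dummy_shrink[OF cpS(1)[of j, unfolded B_def], of a1 "\<beta> * snd (b j)"] cpS(3)[of j] sigd[of j]
          pos[of j] pos[of "Suc j"] \<beta> by (simp add: B_def del: upt_Suc)
      have geo: "snd (b j) \<le> snd (b 0) * (1/2)^j" for j
      proof (induction j)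
        case 0 then show ?case by simp
      next
        case (Suc j) then show ?case using half[of j] by simp
      qed
      have small: "\<exists>n. 2 * snd (b n) < e" if epos: "e > 0" for e
      proof -
        obtain n where n: "(1/2::real)^n < e / (2 * snd (b 0))"
          using real_arch_pow_inv[of "e / (2 * snd (b 0))" "1/2"] epos pos[of 0] by auto
        then have "2 * snd (b 0) * (1/2)^n < e" using pos[of 0]
          by (simp add: field_simps)
        then show ?thesis using geo[of n] by (intro exI[of _ n]) simp
      qed
      obtain p where p: "\<And>n. p \<in> B n"
      proof (rule decreasing_closed_nest[of B])
        show "closed (B n)" for n by (simp add: B_def)
        show "B n \<noteq> {}" for n using pos[of n] by (simp add: B_def)
        show "m \<le> n \<Longrightarrow> B n \<subseteq> B m" for m n by (rule nest)
        fix e :: real assume e: "e > 0"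
        obtain n where "2 * snd (b n) < e" using small[OF e] by blast
        then have "\<forall>x\<in>B n. \<forall>y\<in>B n. dist x y < e"
          unfolding B_def by (smt (verit) dist_commute dist_triangle mem_cball)
        then show "\<exists>n. \<forall>x\<in>B n. \<forall>y\<in>B n. dist x y < e" by blast
      qed blast
      have pV: "p \<in> V" using p[of 0] cp0 by blast
      obtain e where e: "e > 0" "ball p e \<subseteq> Wf p" using WT[OF pV] open_contains_ball by blast
      obtain n where n: "2 * snd (b n) < e" using small[OF e(1)] by blast
      have "B n \<subseteq> ball p e"
      proof
        fix x assume "x \<in> B n"
        then show "x \<in> ball p e" using p[of n] n unfolding B_def
          by (smt (verit) dist_commute dist_triangle mem_ball mem_cball)
      qed
      then have "Q n" unfolding Q_def using e pV by blast
      then show ?thesis using False by blast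
    qed
  qed
qed

lemma gmul_csg_left: "gmul (csg c v) b = csg c (gmul v b)"
  by (simp add: gmul_def csg_def vec_eq_iff matrix_matrix_mult_def sum_distrib_left mult.assoc)

lemma holo_vg_cont: "holo_vg W h \<Longrightarrow> open W \<Longrightarrow> continuous_on W h"
  unfolding holo_vg_def continuous_on_eq_continuous_at
  using has_derivative_continuous by blast

lemma holo_vg_mono: "holo_vg W h \<Longrightarrow> W' \<subseteq> W \<Longrightarrow> holo_vg W' h"
  unfolding holo_vg_def by blast

lemma holo_gv_isCont: "holo_gv Ob H \<Longrightarrow> u \<in> Ob \<Longrightarrow> isCont H u"
  unfolding holo_gv_def using has_derivative_continuous by blast

lemma holo_gv_comp:
  assumes "holo_gv Ob0 H0" "\<And>z. z \<in> Ob \<Longrightarrow> gmul z \<rho> \<in> Ob0"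
  shows "holo_gv Ob (\<lambda>x. H0 (gmul x \<rho>))"
  unfolding holo_gv_def
proof
  fix z assume z: "z \<in> Ob"
  obtain H' where H': "(H0 has_derivative H') (at (gmul z \<rho>))" "\<And>c v. H' (csg c v) = csv c (H' v)"
    using assms(1) assms(2)[OF z] unfolding holo_gv_def by blast
  have R: "((\<lambda>x. gmul x \<rho>) has_derivative (\<lambda>x. gmul x \<rho>)) (at z)"
    by (rule bounded_linear_imp_has_derivative[OF bl_gmul_left])
  have "((H0 \<circ> (\<lambda>x. gmul x \<rho>)) has_derivative (H' \<circ> (\<lambda>x. gmul x \<rho>))) (at z)"
    by (rule diff_chain_at[OF R H'(1)])
  moreover have "(H' \<circ> (\<lambda>x. gmul x \<rho>)) (csg c v) = csv c ((H' \<circ> (\<lambda>x. gmul x \<rho>)) v)" for c v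
    by (simp add: gmul_csg_left H'(2))
  ultimately show "\<exists>H'. ((\<lambda>x. H0 (gmul x \<rho>)) has_derivative H') (at z) \<and> (\<forall>c v. H' (csg c v) = csv c (H' v))"
    by (auto simp: o_def)
qed

lemma chart_transfer:
  assumes dG: "discrete_subgroup \<Gamma>" and dG': "discrete_subgroup \<Gamma>'"
    and ch: "is_chart \<Gamma> V \<psi>" and z0: "z0 \<in> V"
  obtains W h where "open W" "z0 \<in> W" "W \<subseteq> V" "h ` W \<subseteq> SLprod" "\<forall>w\<in>W. \<psi> w = lcoset (h w) \<Gamma>"
     "is_chart \<Gamma>' W (\<lambda>w. lcoset (h w) \<Gamma>')"
proof -
  have sG: "is_subgroup \<Gamma>" and sG': "is_subgroup \<Gamma>'" using dG dG' unfolding discrete_subgroup_def by auto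
  have openV: "open V" and inj: "inj_on \<psi> V" and opq: "openin (qtop \<Gamma>) (\<psi> ` V)"
    and lifts: "\<forall>z\<in>V. \<exists>W h. open W \<and> z \<in> W \<and> W \<subseteq> V \<and> holo_vg W h \<and> h ` W \<subseteq> SLprod \<and>
         (\<forall>w\<in>W. \<psi> w = lcoset (h w) \<Gamma>)"
    and invs: "\<forall>g\<in>SLprod. lcoset g \<Gamma> \<in> \<psi> ` V \<longrightarrow>
        (\<exists>Ob H. open Ob \<and> g \<in> Ob \<and> holo_gv Ob H \<and>
           (\<forall>g'\<in>Ob \<inter> SLprod. lcoset g' \<Gamma> \<in> \<psi> ` V \<longrightarrow> H g' \<in> V \<and> \<psi> (H g') = lcoset g' \<Gamma>))"
    using ch unfolding is_chart_def by auto
  obtain W0 h where W0: "open W0" "z0 \<in> W0" "W0 \<subseteq> V" "holo_vg W0 h" "h ` W0 \<subseteq> SLprod"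
    "\<forall>w\<in>W0. \<psi> w = lcoset (h w) \<Gamma>"
    using lifts z0 by metis
  have hc: "continuous_on W0 h" using holo_vg_cont W0 by blast
  define g0 where "g0 = h z0"
  have g0: "g0 \<in> SLprod" using W0 unfolding g0_def by blast
  obtain r' where r': "r' > 0"
    "\<And>a b \<gamma>. a \<in> SLprod \<Longrightarrow> dist a g0 < r' \<Longrightarrow> dist b g0 < r' \<Longrightarrow> \<gamma> \<in> \<Gamma>' \<Longrightarrow> b = gmul a \<gamma> \<Longrightarrow> a = b"
    using discrete_near[OF dG' g0] by blast
  define W where "W = W0 \<inter> h -` ball g0 r'"
  have oW: "open W" unfolding W_def using continuous_open_preimage[OF hc W0(1)] by simp
  have z0W: "z0 \<in> W" unfolding W_def using W0 r' by (simp add: g0_def)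
  have WV: "W \<subseteq> V" "W \<subseteq> W0" unfolding W_def using W0 by auto
  have hW: "h w \<in> SLprod" "dist (h w) g0 < r'" if "w \<in> W" for w
    using that W0 unfolding W_def by (auto simp: dist_commute)
  have psiW: "\<psi> w = lcoset (h w) \<Gamma>" if "w \<in> W" for w using that WV W0 by blast
  define \<psi>' where "\<psi>' w = lcoset (h w) \<Gamma>'" for w
  have Pre: "openin (top_of_set SLprod) {g \<in> SLprod. lcoset g \<Gamma> \<in> \<psi> ` V}"
    using opq unfolding openin_qtop by blast
  have inj': "inj_on \<psi>' W"
  proof (rule inj_onI)
    fix w w' assume w: "w \<in> W" "w' \<in> W" "\<psi>' w = \<psi>' w'"
    then obtain \<gamma> where "\<gamma> \<in> \<Gamma>'" "h w' = gmul (h w) \<gamma>" unfolding \<psi>'_def using lcoset_eq[OF sG'] by blast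
    then have "h w = h w'" using r'(2) hW w by blast
    then have "\<psi> w = \<psi> w'" using psiW w by simp
    then show "w = w'" using inj w WV unfolding inj_on_def by blast
  qed
  have hWo: "openin (top_of_set SLprod) (h ` W)"
    unfolding openin_euclidean_subtopology_iff
  proof (intro conjI ballI)
    show "h ` W \<subseteq> SLprod" using hW by blast
    fix u assume "u \<in> h ` W"
    then obtain w0 where w0: "w0 \<in> W" "u = h w0" by blast
    have uS: "u \<in> SLprod" using hW w0 by simp
    have uV: "lcoset u \<Gamma> \<in> \<psi> ` V" using psiW w0 WV by force
    obtain Ob H where ObH: "open Ob" "u \<in> Ob" "holo_gv Ob H"
      "\<And>g'. g' \<in> Ob \<inter> SLprod \<Longrightarrow> lcoset g' \<Gamma> \<in> \<psi> ` V \<Longrightarrow> H g' \<in> V \<and> \<psi> (H g') = lcoset g' \<Gamma>"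
      using invs uS uV by metis
    have "H u \<in> V \<and> \<psi> (H u) = lcoset u \<Gamma>" using ObH(2,4) uS uV by blast
    moreover have "\<psi> w0 = lcoset u \<Gamma>" using psiW[OF w0(1)] w0(2) by simp
    moreover have "w0 \<in> V" using w0 WV by blast
    ultimately have Hu: "H u = w0" using inj_onD[OF inj] by metis
    have cH: "isCont H u" using holo_gv_isCont ObH by blast
    have ch0: "isCont h w0" using hc W0(1) w0 WV continuous_on_eq_continuous_at by blast
    have chH: "isCont (\<lambda>g. h (H g)) u" using isCont_o2[OF cH] ch0 Hu by simp
    obtain r where r: "r > 0"
      "\<And>a b \<gamma>. a \<in> SLprod \<Longrightarrow> dist a u < r \<Longrightarrow> dist b u < r \<Longrightarrow> \<gamma> \<in> \<Gamma> \<Longrightarrow> b = gmul a \<gamma> \<Longrightarrow> a = b"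
      using discrete_near[OF dG uS] by blast
    obtain d1 where d1: "d1 > 0" "ball w0 d1 \<subseteq> W" using oW w0 open_contains_ball by blast
    obtain e1 where e1: "e1 > 0" "\<And>g. dist g u < e1 \<Longrightarrow> dist (H g) (H u) < d1"
      using cH d1(1) unfolding continuous_at_eps_delta by blast
    obtain e2 where e2: "e2 > 0" "\<And>g. dist g u < e2 \<Longrightarrow> dist (h (H g)) (h (H u)) < r"
      using chH r(1) unfolding continuous_at_eps_delta by blast
    obtain e3 where e3: "e3 > 0" "ball u e3 \<subseteq> Ob" using ObH(1,2) open_contains_ball by blast
    obtain e4 where e4: "e4 > 0" "\<And>g. g \<in> SLprod \<Longrightarrow> dist g u < e4 \<Longrightarrow> g \<in> {g \<in> SLprod. lcoset g \<Gamma> \<in> \<psi> ` V}"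
      using Pre uS uV unfolding openin_euclidean_subtopology_iff by blast
    show "\<exists>e>0. \<forall>g\<in>SLprod. dist g u < e \<longrightarrow> g \<in> h ` W"
    proof (intro exI[of _ "min (min e1 e2) (min (min e3 e4) r)"] conjI ballI impI)
      show "0 < min (min e1 e2) (min (min e3 e4) r)" using e1 e2 e3 e4 r by simp
      fix g assume g: "g \<in> SLprod" "dist g u < min (min e1 e2) (min (min e3 e4) r)"
      have gV: "lcoset g \<Gamma> \<in> \<psi> ` V" using e4(2)[of g] g by simp
      have gOb: "g \<in> Ob" using e3 g by (auto simp: dist_commute)
      have HgV: "H g \<in> V" "\<psi> (H g) = lcoset g \<Gamma>" using ObH(4)[of g] gV gOb g by auto
      have HgW: "H g \<in> W" using e1(2)[of g] g d1 Hu by (auto simp: dist_commute)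
      have "lcoset g \<Gamma> = lcoset (h (H g)) \<Gamma>" using HgV psiW[OF HgW] by simp
      then obtain \<gamma> where \<gamma>: "\<gamma> \<in> \<Gamma>" "h (H g) = gmul g \<gamma>" using lcoset_eq[OF sG] by blast
      have "dist (h (H g)) u < r" using e2(2)[of g] g Hu w0 by simp
      then have "g = h (H g)" using r(2)[OF g(1) _ _ \<gamma>] g by simp
      then show "g \<in> h ` W" using HgW by blast
    qed
  qed
  have pre': "{g \<in> SLprod. lcoset g \<Gamma>' \<in> \<psi>' ` W} = (\<Union>\<gamma>\<in>\<Gamma>'. SLprod \<inter> (\<lambda>g. gmul g (ginv \<gamma>)) -` (h ` W))"
  proof (intro equalityI subsetI)
    fix g assume "g \<in> {g \<in> SLprod. lcoset g \<Gamma>' \<in> \<psi>' ` W}"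
    then obtain w where w: "g \<in> SLprod" "w \<in> W" "lcoset g \<Gamma>' = lcoset (h w) \<Gamma>'" unfolding \<psi>'_def by auto
    then obtain \<gamma> where \<gamma>: "\<gamma> \<in> \<Gamma>'" "g = gmul (h w) \<gamma>" using lcoset_eq[OF sG'] by metis
    have "gmul g (ginv \<gamma>) = h w" using \<gamma> subgroup_SL[OF sG'] by (simp flip: gmul_assoc add: ginv_right)
    then show "g \<in> (\<Union>\<gamma>\<in>\<Gamma>'. SLprod \<inter> (\<lambda>g. gmul g (ginv \<gamma>)) -` (h ` W))" using w \<gamma> by blast
  next
    fix g assume "g \<in> (\<Union>\<gamma>\<in>\<Gamma>'. SLprod \<inter> (\<lambda>g. gmul g (ginv \<gamma>)) -` (h ` W))"
    then obtain \<gamma> w where gw: "\<gamma> \<in> \<Gamma>'" "g \<in> SLprod" "w \<in> W" "gmul g (ginv \<gamma>) = h w" by auto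
    have "gmul (h w) \<gamma> = g" using gw subgroup_SL[OF sG'] ginv_SL
      by (metis gmul_assoc ginv_left gmul_gone(2))
    then have "lcoset g \<Gamma>' = lcoset (h w) \<Gamma>'" using lcoset_mul[OF sG' gw(1)] by metis
    then show "g \<in> {g \<in> SLprod. lcoset g \<Gamma>' \<in> \<psi>' ` W}" using gw unfolding \<psi>'_def by auto
  qed
  have opq': "openin (qtop \<Gamma>') (\<psi>' ` W)"
    unfolding openin_qtop pre'
  proof (intro conjI openin_Union ballI)
    show "\<psi>' ` W \<subseteq> quot \<Gamma>'" unfolding \<psi>'_def using hW lcoset_in_quot by blast
    fix S assume "S \<in> (\<lambda>\<gamma>. SLprod \<inter> (\<lambda>g. gmul g (ginv \<gamma>)) -` (h ` W)) ` \<Gamma>'"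
    then obtain \<gamma> where \<gamma>: "\<gamma> \<in> \<Gamma>'" "S = SLprod \<inter> (\<lambda>g. gmul g (ginv \<gamma>)) -` (h ` W)" by blast
    have "(\<lambda>g. gmul g (ginv \<gamma>)) \<in> SLprod \<rightarrow> SLprod"
      using \<gamma> subgroup_SL[OF sG'] ginv_SL gmul_SL by blast
    then show "openin (top_of_set SLprod) S"
      unfolding \<gamma>(2) by (rule continuous_openin_preimage[OF cont_gmul_left _ hWo])
  qed
  have invs': "\<forall>g\<in>SLprod. lcoset g \<Gamma>' \<in> \<psi>' ` W \<longrightarrow>
        (\<exists>Ob H. open Ob \<and> g \<in> Ob \<and> holo_gv Ob H \<and>
           (\<forall>g'\<in>Ob \<inter> SLprod. lcoset g' \<Gamma>' \<in> \<psi>' ` W \<longrightarrow> H g' \<in> W \<and> \<psi>' (H g') = lcoset g' \<Gamma>'))"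
  proof (intro ballI impI)
    fix g assume g: "g \<in> SLprod" "lcoset g \<Gamma>' \<in> \<psi>' ` W"
    then obtain w where w: "w \<in> W" "lcoset g \<Gamma>' = lcoset (h w) \<Gamma>'" unfolding \<psi>'_def by auto
    then obtain \<gamma> where \<gamma>: "\<gamma> \<in> \<Gamma>'" "g = gmul (h w) \<gamma>" using lcoset_eq[OF sG'] by metis
    define u where "u = h w"
    define \<rho> where "\<rho> = ginv \<gamma>"
    have \<rho>: "\<rho> \<in> \<Gamma>'" "\<rho> \<in> SLprod" unfolding \<rho>_def using subgroup_ginv[OF sG' \<gamma>(1)] subgroup_SL[OF sG'] by auto
    have uS: "u \<in> SLprod" using hW w unfolding u_def by simp
    have uV: "lcoset u \<Gamma> \<in> \<psi> ` V" using psiW w WV unfolding u_def by force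
    obtain Ob0 H0 where ObH: "open Ob0" "u \<in> Ob0" "holo_gv Ob0 H0"
      "\<And>g'. g' \<in> Ob0 \<inter> SLprod \<Longrightarrow> lcoset g' \<Gamma> \<in> \<psi> ` V \<Longrightarrow> H0 g' \<in> V \<and> \<psi> (H0 g') = lcoset g' \<Gamma>"
      using invs uS uV by metis
    define Ob where "Ob = UNIV \<inter> (\<lambda>x. gmul x \<rho>) -` (Ob0 \<inter> ball g0 r')"
    have oOb: "open Ob" unfolding Ob_def
      by (rule continuous_open_preimage[OF cont_gmul_left]) (use ObH(1) in auto)
    have Rg: "gmul g \<rho> = u" unfolding \<rho>_def u_def using \<gamma> subgroup_SL[OF sG']
      by (simp flip: gmul_assoc add: ginv_right)
    have gOb: "g \<in> Ob" unfolding Ob_def using Rg ObH(2) hW[OF w(1)] by (simp add: u_def dist_commute)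
    have hol: "holo_gv Ob (\<lambda>x. H0 (gmul x \<rho>))"
      by (rule holo_gv_comp[OF ObH(3)]) (auto simp: Ob_def)
    show "\<exists>Ob H. open Ob \<and> g \<in> Ob \<and> holo_gv Ob H \<and>
           (\<forall>g'\<in>Ob \<inter> SLprod. lcoset g' \<Gamma>' \<in> \<psi>' ` W \<longrightarrow> H g' \<in> W \<and> \<psi>' (H g') = lcoset g' \<Gamma>')"
    proof (intro exI conjI ballI impI)
      show "open Ob" "g \<in> Ob" "holo_gv Ob (\<lambda>x. H0 (gmul x \<rho>))" by (fact oOb, fact gOb, fact hol)
      fix g' assume g': "g' \<in> Ob \<inter> SLprod" "lcoset g' \<Gamma>' \<in> \<psi>' ` W"
      then obtain w' where w': "w' \<in> W" "lcoset g' \<Gamma>' = lcoset (h w') \<Gamma>'" unfolding \<psi>'_def by auto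
      define x where "x = gmul g' \<rho>"
      have xS: "x \<in> SLprod" unfolding x_def using g' \<rho> gmul_SL by blast
      have xO: "x \<in> Ob0" "dist x g0 < r'" using g' unfolding x_def Ob_def by (auto simp: dist_commute)
      have "lcoset x \<Gamma>' = lcoset g' \<Gamma>'" unfolding x_def by (rule lcoset_mul[OF sG' \<rho>(1)])
      then have "lcoset x \<Gamma>' = lcoset (h w') \<Gamma>'" using w' by simp
      then obtain \<gamma>2 where "\<gamma>2 \<in> \<Gamma>'" "h w' = gmul x \<gamma>2" using lcoset_eq[OF sG'] by metis
      then have xh: "x = h w'" using r'(2)[OF xS xO(2) hW(2)[OF w'(1)]] by blast
      have "lcoset x \<Gamma> \<in> \<psi> ` V" using psiW[OF w'(1)] xh w' WV by force
      then have "H0 x \<in> V \<and> \<psi> (H0 x) = lcoset x \<Gamma>" using ObH(4) xO xS by blast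
      moreover have "\<psi> w' = lcoset x \<Gamma>" using psiW[OF w'(1)] xh by simp
      moreover have "w' \<in> V" using w' WV by blast
      ultimately have "H0 x = w'" using inj_onD[OF inj] by metis
      then show "H0 (gmul g' \<rho>) \<in> W" "\<psi>' (H0 (gmul g' \<rho>)) = lcoset g' \<Gamma>'"
        using w' xh unfolding x_def \<psi>'_def by auto
    qed
  qed
  have chart': "is_chart \<Gamma>' W \<psi>'"
    unfolding is_chart_def
  proof (intro conjI)
    show "open W" by (fact oW)
    show "inj_on \<psi>' W" by (fact inj')
    show "\<psi>' ` W \<subseteq> quot \<Gamma>'" unfolding \<psi>'_def using hW lcoset_in_quot by blast
    show "openin (qtop \<Gamma>') (\<psi>' ` W)" by (fact opq')
    show "\<forall>z\<in>W. \<exists>W' h'. open W' \<and> z \<in> W' \<and> W' \<subseteq> W \<and> holo_vg W' h' \<and> h' ` W' \<subseteq> SLprod \<and>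
         (\<forall>w\<in>W'. \<psi>' w = lcoset (h' w) \<Gamma>')"
      using oW holo_vg_mono[OF W0(4) WV(2)] hW unfolding \<psi>'_def by blast
    show "\<forall>g\<in>SLprod. lcoset g \<Gamma>' \<in> \<psi>' ` W \<longrightarrow>
        (\<exists>Ob H. open Ob \<and> g \<in> Ob \<and> holo_gv Ob H \<and>
           (\<forall>g'\<in>Ob \<inter> SLprod. lcoset g' \<Gamma>' \<in> \<psi>' ` W \<longrightarrow> H g' \<in> W \<and> \<psi>' (H g') = lcoset g' \<Gamma>'))"
      by (fact invs')
  qed
  show ?thesis
    using that[OF oW z0W WV(1) _ _ chart'[unfolded \<psi>'_def]] hW psiW by blast
qed

lemma HAW_transfer:
  assumes dG: "discrete_subgroup \<Gamma>" and dG': "discrete_subgroup \<Gamma>'"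
    and fi: "finite_index (\<Gamma> \<inter> \<Gamma>') \<Gamma>" and fi': "finite_index (\<Gamma> \<inter> \<Gamma>') \<Gamma>'"
    and F: "is_subgroup F" and H': "HAW_quot \<Gamma>' (Ebdd F \<Gamma>')"
  shows "HAW_quot \<Gamma> (Ebdd F \<Gamma>)"
  unfolding HAW_quot_def
proof (intro allI impI)
  fix V \<psi> assume ch: "is_chart \<Gamma> V \<psi>"
  have sG: "is_subgroup \<Gamma>" and sG': "is_subgroup \<Gamma>'" using dG dG' unfolding discrete_subgroup_def by auto
  have sD: "is_subgroup (\<Gamma> \<inter> \<Gamma>')" by (rule subgroup_Int[OF sG sG'])
  interpret c1: cover "\<Gamma> \<inter> \<Gamma>'" \<Gamma> by (rule cover.intro[OF sD sG Int_lower1 fi])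
  interpret c2: cover "\<Gamma> \<inter> \<Gamma>'" \<Gamma>' by (rule cover.intro[OF sD sG' Int_lower2 fi'])
  have FS: "F \<subseteq> SLprod" using F unfolding is_subgroup_def by blast
  show "HAW_on V {z \<in> V. \<psi> z \<in> Ebdd F \<Gamma>}"
  proof (rule HAW_local)
    fix z assume z: "z \<in> V"
    obtain W h where W: "open W" "z \<in> W" "W \<subseteq> V" "h ` W \<subseteq> SLprod" "\<forall>w\<in>W. \<psi> w = lcoset (h w) \<Gamma>"
      "is_chart \<Gamma>' W (\<lambda>w. lcoset (h w) \<Gamma>')"
      by (rule chart_transfer[OF dG dG' ch z])
    define T where "T = {w \<in> W. lcoset (h w) \<Gamma>' \<in> Ebdd F \<Gamma>'}"
    have hT: "HAW_on W T" using H'[unfolded HAW_quot_def, rule_format, OF W(6)] unfolding T_def by simp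
    have Tsub: "T \<subseteq> {z \<in> V. \<psi> z \<in> Ebdd F \<Gamma>}"
    proof
      fix w assume "w \<in> T"
      then have w: "w \<in> W" "lcoset (h w) \<Gamma>' \<in> Ebdd F \<Gamma>'" unfolding T_def by auto
      have hS: "h w \<in> SLprod" using W(4) w by blast
      have "lcoset (h w) \<Gamma> \<in> Ebdd F \<Gamma>"
        using w(2) c1.Ebdd_cover[OF FS hS] c2.Ebdd_cover[OF FS hS] by simp
      then show "w \<in> {z \<in> V. \<psi> z \<in> Ebdd F \<Gamma>}" using W(3,5) w by auto
    qed
    show "\<exists>W T. open W \<and> z \<in> W \<and> W \<subseteq> V \<and> T \<subseteq> {z \<in> V. \<psi> z \<in> Ebdd F \<Gamma>} \<and> HAW_on W T"
      by (rule exI[of _ W], rule exI[of _ T]) (simp only: W(1,2,3) Tsub hT simp_thms)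
  qed
qed

theorem lemma6p1:
  fixes \<Gamma> \<Gamma>' F :: "'k::finite grp set"
  assumes "lattice \<Gamma>" and "lattice \<Gamma>'" and "commensurable \<Gamma> \<Gamma>'" and "is_subgroup F"
  shows "HAW_quot \<Gamma> (Ebdd F \<Gamma>) \<longleftrightarrow> HAW_quot \<Gamma>' (Ebdd F \<Gamma>')"
proof -
  have d1: "discrete_subgroup \<Gamma>" using assms(1) unfolding lattice_def by (rule conjunct1)
  have d2: "discrete_subgroup \<Gamma>'" using assms(2) unfolding lattice_def by (rule conjunct1)
  note d = d1 d2
  have fi: "finite_index (\<Gamma> \<inter> \<Gamma>') \<Gamma>" "finite_index (\<Gamma> \<inter> \<Gamma>') \<Gamma>'"
    using assms(3) unfolding commensurable_def by auto
  have fi2: "finite_index (\<Gamma>' \<inter> \<Gamma>) \<Gamma>'" "finite_index (\<Gamma>' \<inter> \<Gamma>) \<Gamma>"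
    using fi by (simp_all add: Int_commute)
  show ?thesis
    using HAW_transfer[OF d(1) d(2) fi(1) fi(2) assms(4)] HAW_transfer[OF d(2) d(1) fi2(1) fi2(2) assms(4)]
    by blast
qed

end
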